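(* Let $d, N$ be positive integers and $r \ge 2$ an integer, let $\|\cdot\|$ be any norm on $\mathbb{R}^d$ with unit ball $B = \{v \in \mathbb{R}^d : \|v\| \le 1\}$, and let $V_1, \dots, V_N$ be finite subsets of $B$ with $|V_i| \ge r$ for all $i \in [N]$. Then for every $k \in [r]$ there are subsets $U_i \subseteq V_i$, $i \in [N]$, with $|U_i| = k$ for all $i$, such that \[ \max_{n \in [N]} \Big\| \sum_{i \in [n]} \Big( \sum_{v \in U_i} v - \frac{k}{|V_i|} \sum_{v \in V_i} v \Big) \Big\| \le 2d. \]
   Context: $[n] = \{1, \dots, n\}$. *)

theory Defs
  imports "HOL-Analysis.Analysis"
begin

definition is_norm :: "('a::real_vector \<Rightarrow> real) \<Rightarrow> bool" where
  "is_norm nrm \<longleftrightarrow>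
     (\<forall>x. 0 \<le> nrm x) \<and>
     (\<forall>x. nrm x = 0 \<longleftrightarrow> x = 0) \<and>
     (\<forall>c x. nrm (c *\<^sub>R x) = \<bar>c\<bar> * nrm x) \<and>
     (\<forall>x y. nrm (x + y) \<le> nrm x + nrm y)"

end

theory Submission
  imports Defs
begin

lemma family_dep:
  fixes h :: "'i \<Rightarrow> 'a::euclidean_space"
  assumes "finite T" "card T > DIM('a)"
  shows "\<exists>a. (\<exists>t\<in>T. a t \<noteq> 0) \<and> (\<Sum>t\<in>T. a t *\<^sub>R h t) = 0"
proof (cases "inj_on h T")
  case False
  then obtain t1 t2 where t: "t1 \<in> T" "t2 \<in> T" "t1 \<noteq> t2" "h t1 = h t2"
    unfolding inj_on_def by blast
  define a where "a = (\<lambda>t. (if t = t1 then 1 else 0) - (if t = t2 then (1::real) else 0))"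
  have "(\<Sum>t\<in>T. a t *\<^sub>R h t) = (\<Sum>t\<in>T. (if t = t1 then h t1 else 0)) - (\<Sum>t\<in>T. (if t = t2 then h t2 else 0))"
    unfolding a_def by (auto simp: scaleR_diff_left sum_subtractf intro!: sum.cong arg_cong2[where f="(-)"])
  also have "\<dots> = 0" using t assms(1) by (simp add: sum.delta)
  finally show ?thesis using t by (intro exI[of _ a]) (auto simp: a_def)
next
  case True
  then have "card (h ` T) > DIM('a)" using assms by (simp add: card_image)
  then have "dependent (h ` T)" using dependent_biggerset by blast
  then obtain t u where tu: "finite t" "t \<subseteq> h ` T" "\<exists>v\<in>t. u v \<noteq> 0" "(\<Sum>v\<in>t. u v *\<^sub>R v) = 0"
    unfolding dependent_explicit by blast
  define a where "a = (\<lambda>x. if h x \<in> t then u (h x) else 0)"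
  have "(\<Sum>x\<in>T. a x *\<^sub>R h x) = (\<Sum>w\<in>h ` T. (if w \<in> t then u w else 0) *\<^sub>R w)"
    using True by (simp add: sum.reindex a_def)
  also have "\<dots> = (\<Sum>w\<in>h ` T. (if w \<in> t then u w *\<^sub>R w else 0))"
    by (intro sum.cong) auto
  also have "\<dots> = (\<Sum>w\<in>t. u w *\<^sub>R w)"
    using tu(2) assms(1) by (simp add: sum.If_cases Int_absorb1)
  also have "\<dots> = 0" by (rule tu(4))
  finally show ?thesis using tu(2,3) by (intro exI[of _ a]) (auto simp: a_def)
qed

lemma kernel:
  fixes g :: "'i \<Rightarrow> 'a::real_vector" and b :: "'i \<Rightarrow> 'j"
  assumes dep: "\<And>T (h::'i \<Rightarrow> 'a). finite T \<Longrightarrow> card T > D \<Longrightarrow> (\<And>t. t \<in> T \<Longrightarrow> \<exists>u w. h t = g u - g w) \<Longrightarrow> \<exists>a. (\<exists>t\<in>T. a t \<noteq> 0) \<and> (\<Sum>t\<in>T. a t *\<^sub>R h t) = 0"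
    and fin: "finite F" and cardF: "card F > 2*D"
    and two: "\<And>s. s\<in>F \<Longrightarrow> \<exists>s'\<in>F. s' \<noteq> s \<and> b s' = b s"
  shows "\<exists>z. (\<forall>s. s \<notin> F \<longrightarrow> z s = 0) \<and> (\<exists>s\<in>F. z s \<noteq> 0) \<and>
             (\<forall>j. (\<Sum>s\<in>{s\<in>F. b s = j}. z s) = 0) \<and> (\<Sum>s\<in>F. z s *\<^sub>R g s) = 0"
proof -
  define B where "B = b ` F"
  define p where "p = (\<lambda>j. SOME s. s \<in> F \<and> b s = j)"
  have p: "p j \<in> F \<and> b (p j) = j" if "j \<in> B" for j
    unfolding p_def by (rule someI_ex) (use that B_def in auto)
  define P where "P = p ` B"
  define T where "T = F - P"
  have finB: "finite B" using fin B_def by simp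
  have injp: "inj_on p B" by (metis inj_onI p)
  have PF: "P \<subseteq> F" using p P_def by auto
  have cardP: "card P = card B" using injp P_def by (simp add: card_image)
  have fib: "card {s\<in>F. b s = j} \<ge> 2" if jB: "j \<in> B" for j
  proof -
    obtain s where s: "s \<in> F" "b s = j" using jB B_def by auto
    obtain s' where s': "s' \<in> F" "s' \<noteq> s" "b s' = b s" using two[OF s(1)] by blast
    have "{s, s'} \<subseteq> {s\<in>F. b s = j}" using s s' by auto
    moreover have "card {s, s'} = 2" using s' by auto
    ultimately show ?thesis using fin by (metis (no_types, lifting) card_mono finite_subset mem_Collect_eq subsetI)
  qed
  have "card F = (\<Sum>j\<in>B. card {s\<in>F. b s = j})"
  proof -
    have "(\<Sum>j\<in>B. \<Sum>s\<in>{s\<in>F. b s = j}. (1::nat)) = (\<Sum>s\<in>F. 1)"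
      by (rule sum.group) (use fin finB B_def in auto)
    then show ?thesis by simp
  qed
  also have "\<dots> \<ge> (\<Sum>j\<in>B. 2)" by (intro sum_mono fib)
  finally have h1: "2 * card B \<le> card F" by simp
  have h2: "card T = card F - card P" unfolding T_def
    by (rule card_Diff_subset[OF finite_subset[OF PF fin] PF])
  have cardT: "card T > D"
  proof -
    have "card T = card F - card B" using h2 cardP by simp
    then show ?thesis using h1 cardF by linarith
  qed
  have finT: "finite T" using fin T_def by simp
  obtain a where a: "\<exists>t\<in>T. a t \<noteq> 0" "(\<Sum>t\<in>T. a t *\<^sub>R (g t - g (p (b t)))) = 0"
    using dep[where h="\<lambda>t. g t - g (p (b t))", OF finT cardT] by blast
  have TF: "t \<in> T \<Longrightarrow> t \<in> F" for t using T_def by auto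
  have pbt: "t \<in> T \<Longrightarrow> p (b t) \<in> F \<and> b (p (b t)) = b t" for t using p TF B_def by auto
  have pbtP: "t \<in> T \<Longrightarrow> p (b t) \<in> P" for t using TF B_def P_def by auto
  define z where "z = (\<lambda>s. \<Sum>t\<in>T. a t * ((if s = t then 1 else 0) - (if s = p (b t) then 1 else 0)))"
  have z1: "\<forall>s. s \<notin> F \<longrightarrow> z s = 0"
  proof (intro allI impI)
    fix s assume sF: "s \<notin> F"
    show "z s = 0" unfolding z_def
    proof (rule sum.neutral, rule ballI)
      fix t assume "t \<in> T"
      then have "s \<noteq> t" "s \<noteq> p (b t)" using TF pbt sF by auto
      then show "a t * ((if s = t then 1 else 0) - (if s = p (b t) then 1 else 0)) = 0" by simp
    qed
  qed
  obtain t0 where t0: "t0 \<in> T" "a t0 \<noteq> 0" using a(1) by blast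
  have "z t0 = (\<Sum>t\<in>T. (if t0 = t then a t else 0))"
    unfolding z_def
  proof (intro sum.cong refl)
    fix t assume "t \<in> T"
    then have "t0 \<noteq> p (b t)" using pbtP t0 T_def by auto
    then show "a t * ((if t0 = t then 1 else 0) - (if t0 = p (b t) then 1 else 0)) = (if t0 = t then a t else 0)"
      by simp
  qed
  also have "\<dots> = a t0" using t0 finT by (simp add: sum.delta)
  finally have "z t0 \<noteq> 0" using t0 by simp
  then have z2: "\<exists>s\<in>F. z s \<noteq> 0" using TF[OF t0(1)] by blast
  have z3: "(\<Sum>s\<in>{s\<in>F. b s = j}. z s) = 0" for j
  proof -
    define Fj where "Fj = {s\<in>F. b s = j}"
    have finj: "finite Fj" using fin Fj_def by simp
    have "(\<Sum>s\<in>Fj. z s) = (\<Sum>t\<in>T. \<Sum>s\<in>Fj. a t * ((if s = t then 1 else 0) - (if s = p (b t) then 1 else 0)))"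
      unfolding z_def by (rule sum.swap)
    also have "\<dots> = (\<Sum>t\<in>T. 0)"
    proof (rule sum.cong[OF refl])
      fix t assume t: "t \<in> T"
      have "(\<Sum>s\<in>Fj. a t * ((if s = t then 1 else 0) - (if s = p (b t) then 1 else 0)))
          = a t * ((\<Sum>s\<in>Fj. (if s = t then 1 else 0)) - (\<Sum>s\<in>Fj. (if s = p (b t) then 1 else 0)))"
        by (simp only: sum_subtractf[symmetric] sum_distrib_left)
      also have "(\<Sum>s\<in>Fj. (if s = t then 1 else 0)) = (if t \<in> Fj then (1::real) else 0)"
        using finj by (rule sum.delta)
      also have "(\<Sum>s\<in>Fj. (if s = p (b t) then 1 else 0)) = (if p (b t) \<in> Fj then (1::real) else 0)"
        using finj by (rule sum.delta)
      also have "(if t \<in> Fj then (1::real) else 0) = (if p (b t) \<in> Fj then 1 else 0)"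
        using pbt[OF t] TF[OF t] Fj_def by simp
      finally show "(\<Sum>s\<in>Fj. a t * ((if s = t then 1 else 0) - (if s = p (b t) then 1 else 0))) = 0"
        by simp
    qed
    also have "\<dots> = 0" by simp
    finally show ?thesis unfolding Fj_def .
  qed
  have "(\<Sum>s\<in>F. z s *\<^sub>R g s) = (\<Sum>s\<in>F. \<Sum>t\<in>T. (a t * ((if s = t then 1 else 0) - (if s = p (b t) then 1 else 0))) *\<^sub>R g s)"
    unfolding z_def scaleR_sum_left ..
  also have "\<dots> = (\<Sum>t\<in>T. \<Sum>s\<in>F. (a t * ((if s = t then 1 else 0) - (if s = p (b t) then 1 else 0))) *\<^sub>R g s)"
    by (rule sum.swap)
  also have "\<dots> = (\<Sum>t\<in>T. a t *\<^sub>R ((\<Sum>s\<in>F. (if s = t then g s else 0)) - (\<Sum>s\<in>F. (if s = p (b t) then g s else 0))))"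
  proof (intro sum.cong refl)
    fix t assume "t \<in> T"
    have "(\<Sum>s\<in>F. (a t * ((if s = t then 1 else 0) - (if s = p (b t) then 1 else 0))) *\<^sub>R g s)
       = (\<Sum>s\<in>F. a t *\<^sub>R ((if s = t then g s else 0) - (if s = p (b t) then g s else 0)))"
      by (intro sum.cong refl) auto
    also have "\<dots> = a t *\<^sub>R ((\<Sum>s\<in>F. (if s = t then g s else 0)) - (\<Sum>s\<in>F. (if s = p (b t) then g s else 0)))"
      by (simp only: scaleR_sum_right[symmetric] sum_subtractf)
    finally show "(\<Sum>s\<in>F. (a t * ((if s = t then 1 else 0) - (if s = p (b t) then 1 else 0))) *\<^sub>R g s) = a t *\<^sub>R ((\<Sum>s\<in>F. (if s = t then g s else 0)) - (\<Sum>s\<in>F. (if s = p (b t) then g s else 0)))" .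
  qed
  also have "\<dots> = (\<Sum>t\<in>T. a t *\<^sub>R (g t - g (p (b t))))"
  proof (rule sum.cong[OF refl])
    fix t assume t: "t \<in> T"
    have "(\<Sum>s\<in>F. (if s = t then g s else 0)) = g t" using fin TF[OF t] by (simp add: sum.delta)
    moreover have "(\<Sum>s\<in>F. (if s = p (b t) then g s else 0)) = g (p (b t))" using fin pbt[OF t] by (simp add: sum.delta)
    ultimately show "a t *\<^sub>R ((\<Sum>s\<in>F. (if s = t then g s else 0)) - (\<Sum>s\<in>F. (if s = p (b t) then g s else 0))) = a t *\<^sub>R (g t - g (p (b t)))"
      by simp
  qed
  also have "\<dots> = 0" by (rule a(2))
  finally have z4: "(\<Sum>s\<in>F. z s *\<^sub>R g s) = 0" .
  show ?thesis
    using z1 z2 z3 z4 by (intro exI[of _ z]) simp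
qed


lemma frac_int_False:
  fixes r :: real
  assumes "r \<in> \<int>" "0 \<le> r" "r \<le> 1" "r \<notin> {0,1}"
  shows False
proof -
  obtain n where "r = of_int n" using assms(1) Ints_cases by blast
  then show False using assms by auto
qed

lemma reduce:
  fixes g :: "'i \<Rightarrow> 'a::real_vector" and b :: "'i \<Rightarrow> 'j" and x :: "'i \<Rightarrow> real"
  assumes dep: "\<And>T (h::'i \<Rightarrow> 'a). finite T \<Longrightarrow> card T > D \<Longrightarrow> (\<And>t. t \<in> T \<Longrightarrow> \<exists>u w. h t = g u - g w) \<Longrightarrow> \<exists>a. (\<exists>t\<in>T. a t \<noteq> 0) \<and> (\<Sum>t\<in>T. a t *\<^sub>R h t) = 0"
    and fin: "finite S"
    and x01: "\<forall>s\<in>S. 0 \<le> x s \<and> x s \<le> 1"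
    and xint: "\<forall>j. (\<Sum>s\<in>{s\<in>S. b s = j}. x s) \<in> \<int>"
  shows "\<exists>y. (\<forall>s\<in>S. 0 \<le> y s \<and> y s \<le> 1) \<and> (\<forall>s\<in>S. x s \<in> {0,1} \<longrightarrow> y s = x s) \<and>
     (\<forall>j. (\<Sum>s\<in>{s\<in>S. b s = j}. y s) = (\<Sum>s\<in>{s\<in>S. b s = j}. x s)) \<and>
     (\<Sum>s\<in>S. y s *\<^sub>R g s) = (\<Sum>s\<in>S. x s *\<^sub>R g s) \<and> card {s\<in>S. y s \<notin> {0,1}} \<le> 2*D"
proof -
  have main: "\<forall>x. card {s\<in>S. x s \<notin> {0,1}} = m \<longrightarrow> (\<forall>s\<in>S. 0 \<le> x s \<and> x s \<le> 1) \<longrightarrow>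
     (\<forall>j. (\<Sum>s\<in>{s\<in>S. b s = j}. x s) \<in> \<int>) \<longrightarrow>
     (\<exists>y. (\<forall>s\<in>S. 0 \<le> y s \<and> y s \<le> 1) \<and> (\<forall>s\<in>S. x s \<in> {0,1} \<longrightarrow> y s = x s) \<and>
     (\<forall>j. (\<Sum>s\<in>{s\<in>S. b s = j}. y s) = (\<Sum>s\<in>{s\<in>S. b s = j}. x s)) \<and>
     (\<Sum>s\<in>S. y s *\<^sub>R g s) = (\<Sum>s\<in>S. x s *\<^sub>R g s) \<and> card {s\<in>S. y s \<notin> {0,1}} \<le> 2*D)" for m
  proof (induction m rule: less_induct)
    case (less m)
    show ?case
    proof (intro allI impI)
      fix x :: "'i \<Rightarrow> real"
      assume m: "card {s\<in>S. x s \<notin> {0,1}} = m"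
        and x01: "\<forall>s\<in>S. 0 \<le> x s \<and> x s \<le> 1"
        and xint: "\<forall>j. (\<Sum>s\<in>{s\<in>S. b s = j}. x s) \<in> \<int>"
      define F where "F = {s\<in>S. x s \<notin> {0,1}}"
      have finF: "finite F" using fin F_def by simp
      have FS: "F \<subseteq> S" using F_def by auto
      show "\<exists>y. (\<forall>s\<in>S. 0 \<le> y s \<and> y s \<le> 1) \<and> (\<forall>s\<in>S. x s \<in> {0,1} \<longrightarrow> y s = x s) \<and>
         (\<forall>j. (\<Sum>s\<in>{s\<in>S. b s = j}. y s) = (\<Sum>s\<in>{s\<in>S. b s = j}. x s)) \<and>
         (\<Sum>s\<in>S. y s *\<^sub>R g s) = (\<Sum>s\<in>S. x s *\<^sub>R g s) \<and> card {s\<in>S. y s \<notin> {0,1}} \<le> 2*D"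
      proof (cases "card F \<le> 2*D")
        case True
        then show ?thesis using x01 unfolding F_def by (intro exI[of _ x]) simp
      next
        case False
        have two: "\<exists>s'\<in>F. s' \<noteq> s \<and> b s' = b s" if sF: "s \<in> F" for s
        proof (rule ccontr)
          assume nt: "\<not> (\<exists>s'\<in>F. s' \<noteq> s \<and> b s' = b s)"
          define A where "A = {t\<in>S. b t = b s}"
          have sA: "s \<in> A" using sF F_def A_def by auto
          have finA: "finite A" using fin A_def by simp
          have "(\<Sum>t\<in>A. x t) = x s + (\<Sum>t\<in>A - {s}. x t)"
            using sA finA by (simp add: sum.remove)
          moreover have "(\<Sum>t\<in>A - {s}. x t) \<in> \<int>"
          proof (rule Ints_sum)
            fix t assume "t \<in> A - {s}"
            then have "t \<notin> F" "t \<in> S" using nt A_def by auto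
            then have "x t \<in> {0,1}" using F_def by auto
            then show "x t \<in> \<int>" by auto
          qed
          moreover have "(\<Sum>t\<in>A. x t) \<in> \<int>" using xint A_def by simp
          ultimately have "x s \<in> \<int>" by (metis Ints_diff add_diff_cancel_right')
          moreover have "0 \<le> x s" "x s \<le> 1" "x s \<notin> {0,1}" using x01 sF F_def by auto
          ultimately show False using frac_int_False by blast
        qed
        have cF: "card F > 2*D" using False by simp
        obtain z where z1: "\<forall>s. s \<notin> F \<longrightarrow> z s = 0" and z2: "\<exists>s\<in>F. z s \<noteq> 0"
          and z3: "\<forall>j. (\<Sum>s\<in>{s\<in>F. b s = j}. z s) = 0" and z4: "(\<Sum>s\<in>F. z s *\<^sub>R g s) = 0"
          using kernel[where g=g and b=b and F=F and D=D, OF dep finF cF two] by blast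
        define Z where "Z = {s\<in>F. z s \<noteq> 0}"
        have finZ: "finite Z" using finF Z_def by simp
        have Zne: "Z \<noteq> {}" using z2 Z_def by auto
        define ratio where "ratio = (\<lambda>s. if z s > 0 then (1 - x s) / z s else - x s / z s)"
        define \<tau> where "\<tau> = Min (ratio ` Z)"
        have "\<tau> \<in> ratio ` Z" using Min_in[of "ratio ` Z"] finZ Zne \<tau>_def by blast
        then obtain s0 where s0: "s0 \<in> Z" "ratio s0 = \<tau>" by (metis imageE)
        have tle: "\<tau> \<le> ratio s" if "s \<in> Z" for s
          using that finZ \<tau>_def by simp
        have xF: "0 < x s \<and> x s < 1" if "s \<in> F" for s
          using that x01 F_def by force
        have rpos: "ratio s > 0" if "s \<in> Z" for s
        proof -
          have "s \<in> F" "z s \<noteq> 0" using that Z_def by auto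
          then show ?thesis using xF[of s] unfolding ratio_def
            by (auto simp: field_simps divide_pos_pos divide_neg_neg)
        qed
        have tpos: "\<tau> > 0" using rpos s0 by auto
        define x' where "x' = (\<lambda>s. x s + \<tau> * z s)"
        have x'01: "\<forall>s\<in>S. 0 \<le> x' s \<and> x' s \<le> 1"
        proof
          fix s assume sS: "s \<in> S"
          show "0 \<le> x' s \<and> x' s \<le> 1"
          proof (cases "s \<in> Z")
            case False
            then have "z s = 0" using z1 Z_def by auto
            then show ?thesis using x01 sS x'_def by simp
          next
            case True
            have r: "\<tau> \<le> ratio s" using tle True .
            have xs: "0 < x s" "x s < 1" using xF True Z_def by auto
            show ?thesis
            proof (cases "z s > 0")
              case True
              then have "\<tau> \<le> (1 - x s) / z s" using r ratio_def by simp
              then have "\<tau> * z s \<le> 1 - x s" using True by (simp add: le_divide_eq)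
              moreover have "\<tau> * z s \<ge> 0" using True tpos by simp
              ultimately show ?thesis using xs x'_def by simp
            next
              case False
              then have zn: "z s < 0" using \<open>s \<in> Z\<close> Z_def by auto
              then have "\<tau> \<le> - x s / z s" using r ratio_def by simp
              then have "(- x s / z s) * z s \<le> \<tau> * z s" using zn by (intro mult_right_mono_neg) auto
              then have "\<tau> * z s \<ge> - x s" using zn by simp
              moreover have "\<tau> * z s \<le> 0" using zn tpos by (simp add: mult_nonneg_nonpos)
              ultimately show ?thesis using xs x'_def by simp
            qed
          qed
        qed
        have keep: "\<forall>s\<in>S. x s \<in> {0,1} \<longrightarrow> x' s = x s"
          using z1 F_def x'_def by auto
        have s0F: "s0 \<in> F" "z s0 \<noteq> 0" using s0 Z_def by auto
        have x's0: "x' s0 \<in> {0,1}"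
        proof (cases "z s0 > 0")
          case True
          then have "x' s0 = 1" using s0(2)[symmetric] unfolding x'_def ratio_def by simp
          then show ?thesis by simp
        next
          case False
          then have "x' s0 = 0" using s0(2)[symmetric] s0F unfolding x'_def ratio_def by simp
          then show ?thesis by simp
        qed
        have sub: "{s\<in>S. x' s \<notin> {0,1}} \<subseteq> F - {s0}"
          using keep x's0 F_def by auto
        have "card {s\<in>S. x' s \<notin> {0,1}} < m"
        proof -
          have "card {s\<in>S. x' s \<notin> {0,1}} \<le> card (F - {s0})"
            using sub finF by (intro card_mono) auto
          also have "\<dots> < card F" using s0F finF by (metis card_Diff1_less)
          finally show ?thesis using m F_def by simp
        qed
        have zS: "(\<Sum>s\<in>{s\<in>S. b s = j}. z s) = 0" for j
        proof -
          have "(\<Sum>s\<in>{s\<in>S. b s = j}. z s) = (\<Sum>s\<in>{s\<in>F. b s = j}. z s)"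
            using fin FS z1 by (intro sum.mono_neutral_right) auto
          then show ?thesis using z3 by simp
        qed
        have zgS: "(\<Sum>s\<in>S. z s *\<^sub>R g s) = 0"
        proof -
          have "(\<Sum>s\<in>S. z s *\<^sub>R g s) = (\<Sum>s\<in>F. z s *\<^sub>R g s)"
            using fin FS z1 by (intro sum.mono_neutral_right) auto
          then show ?thesis using z4 by simp
        qed
        have bsum: "(\<Sum>s\<in>{s\<in>S. b s = j}. x' s) = (\<Sum>s\<in>{s\<in>S. b s = j}. x s)" for j
        proof -
          have "(\<Sum>s\<in>{s\<in>S. b s = j}. x' s) = (\<Sum>s\<in>{s\<in>S. b s = j}. x s) + \<tau> * (\<Sum>s\<in>{s\<in>S. b s = j}. z s)"
            unfolding x'_def by (simp only: sum.distrib sum_distrib_left)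
          then show ?thesis using zS[of j] by simp
        qed
        have vsum: "(\<Sum>s\<in>S. x' s *\<^sub>R g s) = (\<Sum>s\<in>S. x s *\<^sub>R g s)"
        proof -
          have "(\<Sum>s\<in>S. x' s *\<^sub>R g s) = (\<Sum>s\<in>S. x s *\<^sub>R g s) + \<tau> *\<^sub>R (\<Sum>s\<in>S. z s *\<^sub>R g s)"
            unfolding x'_def by (simp only: scaleR_add_left sum.distrib scaleR_sum_right scaleR_scaleR)
          then show ?thesis using zgS by simp
        qed
        have x'int: "\<forall>j. (\<Sum>s\<in>{s\<in>S. b s = j}. x' s) \<in> \<int>" using bsum xint by simp
        obtain y where y1: "\<forall>s\<in>S. 0 \<le> y s \<and> y s \<le> 1" and y2: "\<forall>s\<in>S. x' s \<in> {0,1} \<longrightarrow> y s = x' s"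
          and y3: "\<forall>j. (\<Sum>s\<in>{s\<in>S. b s = j}. y s) = (\<Sum>s\<in>{s\<in>S. b s = j}. x' s)"
          and y4: "(\<Sum>s\<in>S. y s *\<^sub>R g s) = (\<Sum>s\<in>S. x' s *\<^sub>R g s)"
          and y5: "card {s\<in>S. y s \<notin> {0,1}} \<le> 2*D"
          using less.IH[OF \<open>card {s\<in>S. x' s \<notin> {0,1}} < m\<close>, THEN spec[of _ x'], THEN mp, OF refl, THEN mp, OF x'01, THEN mp, OF x'int] by (elim exE conjE)
        show ?thesis
        proof (intro exI[of _ y] conjI)
          show "\<forall>s\<in>S. 0 \<le> y s \<and> y s \<le> 1" by (rule y1)
          show "\<forall>s\<in>S. x s \<in> {0,1} \<longrightarrow> y s = x s" using y2 keep by auto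
          show "\<forall>j. (\<Sum>s\<in>{s\<in>S. b s = j}. y s) = (\<Sum>s\<in>{s\<in>S. b s = j}. x s)" using y3 bsum by simp
          show "(\<Sum>s\<in>S. y s *\<^sub>R g s) = (\<Sum>s\<in>S. x s *\<^sub>R g s)" using y4 vsum by simp
          show "card {s\<in>S. y s \<notin> {0,1}} \<le> 2*D" by (rule y5)
        qed
      qed
    qed
  qed
  show ?thesis by (rule main[of "card {s\<in>S. x s \<notin> {0,1}}", THEN spec[of _ x], THEN mp, OF refl, THEN mp, OF x01, THEN mp, OF xint])
qed


lemma nrm_zero: "is_norm nrm \<Longrightarrow> nrm 0 = 0"
  unfolding is_norm_def by blast

lemma nrm_sum:
  assumes "is_norm nrm"
  shows "nrm (\<Sum>s\<in>A. f s) \<le> (\<Sum>s\<in>A. nrm (f s))"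
proof (induction A rule: infinite_finite_induct)
  case (infinite A)
  then show ?case using nrm_zero[OF assms] by simp
next
  case empty
  then show ?case using nrm_zero[OF assms] by simp
next
  case (insert x F)
  have "nrm (\<Sum>s\<in>insert x F. f s) = nrm (f x + (\<Sum>s\<in>F. f s))" using insert by simp
  also have "\<dots> \<le> nrm (f x) + nrm (\<Sum>s\<in>F. f s)" using assms unfolding is_norm_def by blast
  also have "\<dots> \<le> nrm (f x) + (\<Sum>s\<in>F. nrm (f s))" using insert by simp
  also have "\<dots> = (\<Sum>s\<in>insert x F. nrm (f s))" using insert by simp
  finally show ?case .
qed

lemma nrm_scale: "is_norm nrm \<Longrightarrow> nrm (c *\<^sub>R x) = \<bar>c\<bar> * nrm x"
  unfolding is_norm_def by blast

lemma blk_sum: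
  assumes "finite A" "\<forall>i\<in>A. finite (V i)"
  shows "(\<Sum>s\<in>{s\<in>Sigma A V. fst s = j}. f s) = (if j \<in> A then (\<Sum>v\<in>V j. f (j, v)) else 0)"
proof (cases "j \<in> A")
  case True
  then have e: "{s\<in>Sigma A V. fst s = j} = Pair j ` V j" by auto
  show ?thesis unfolding e using True by (simp add: sum.reindex inj_on_def)
next
  case False
  then have e: "{s\<in>Sigma A V. fst s = j} = {}" by auto
  show ?thesis unfolding e using False by simp
qed

lemma sigma_sum:
  assumes "finite A" "\<forall>i\<in>A. finite (V i)"
  shows "(\<Sum>i\<in>A. \<Sum>v\<in>V i. f (i, v)) = (\<Sum>s\<in>Sigma A V. f s)"
  using sum.Sigma[of A V "\<lambda>i v. f (i, v)"] assms by simp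

theorem lemma5:
  fixes nrm :: "real ^ 'd \<Rightarrow> real"
    and V :: "nat \<Rightarrow> (real ^ 'd) set"
    and N r k :: nat
  assumes "is_norm nrm"
    and "N \<ge> 1"
    and "r \<ge> 2"
    and "\<And>i. i \<in> {1..N} \<Longrightarrow> finite (V i)"
    and "\<And>i. i \<in> {1..N} \<Longrightarrow> V i \<subseteq> {v. nrm v \<le> 1}"
    and "\<And>i. i \<in> {1..N} \<Longrightarrow> card (V i) \<ge> r"
    and "k \<in> {1..r}"
  shows "\<exists>U :: nat \<Rightarrow> (real ^ 'd) set.
           (\<forall>i \<in> {1..N}. U i \<subseteq> V i \<and> card (U i) = k) \<and>
           (MAX n \<in> {1..N}. nrm (\<Sum>i \<in> {1..n}.
               (\<Sum>v \<in> U i. v) - (real k / real (card (V i))) *\<^sub>R (\<Sum>v \<in> V i. v)))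
             \<le> 2 * real CARD('d)"
proof -
  note nrm = assms(1)
  define SS where "SS = (\<lambda>n. Sigma {1..n} V)"
  define c where "c = (\<lambda>s::nat \<times> (real^'d). real k / real (card (V (fst s))))"
  define D where "D = CARD('d)"
  have finV: "\<forall>i\<in>{1..n}. finite (V i)" if "n \<le> N" for n using assms(4) that by auto
  have finSS: "finite (SS n)" if "n \<le> N" for n unfolding SS_def using finV[OF that] by auto
  have SSmono: "SS m \<subseteq> SS n" if "m \<le> n" for m n unfolding SS_def using that by auto
  have cardpos: "card (V i) > 0" if "i \<in> {1..N}" for i using assms(3) assms(6)[OF that] by linarith
  have c01: "0 \<le> c s \<and> c s \<le> 1" if "s \<in> SS N" for s
  proof -
    have i: "fst s \<in> {1..N}" using that SS_def by auto
    have "real k \<le> real (card (V (fst s)))" using assms(6)[OF i] assms(7) by simp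
    then show ?thesis unfolding c_def using cardpos[OF i] by (simp add: divide_le_eq_1)
  qed
  have csum: "(\<Sum>v\<in>V j. c (j, v)) = real k" if "j \<in> {1..N}" for j
    unfolding c_def using cardpos[OF that] by simp
  have dep: "\<exists>a. (\<exists>t\<in>T. a t \<noteq> 0) \<and> (\<Sum>t\<in>T. a t *\<^sub>R h t) = 0"
    if "finite T" "card T > D" "\<And>t. t \<in> T \<Longrightarrow> \<exists>u w. h t = snd u - snd w" for T and h :: "nat \<times> (real^'d) \<Rightarrow> real^'d"
    using family_dep[of T h] that unfolding D_def by simp
  define Good where "Good = (\<lambda>m (x :: nat \<times> (real^'d) \<Rightarrow> real).
        (\<forall>s\<in>SS N. 0 \<le> x s \<and> x s \<le> 1) \<and>
        (\<forall>j\<in>{1..N}. (\<Sum>v\<in>V j. x (j, v)) = real k) \<and>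
        (\<Sum>s\<in>SS m. x s *\<^sub>R snd s) = (\<Sum>s\<in>SS m. c s *\<^sub>R snd s) \<and>
        card {s\<in>SS m. x s \<notin> {0,1}} \<le> 2 * D \<and>
        (\<forall>s\<in>SS N - SS m. x s = c s))"
  have GA: "\<forall>s\<in>SS N. 0 \<le> x s \<and> x s \<le> 1" if "Good m x" for m x using that unfolding Good_def by (elim conjE)
  have GB: "\<forall>j\<in>{1..N}. (\<Sum>v\<in>V j. x (j, v)) = real k" if "Good m x" for m x using that unfolding Good_def by (elim conjE)
  have GC: "(\<Sum>s\<in>SS m. x s *\<^sub>R snd s) = (\<Sum>s\<in>SS m. c s *\<^sub>R snd s)" if "Good m x" for m x using that unfolding Good_def by (elim conjE)
  have GD: "card {s\<in>SS m. x s \<notin> {0,1}} \<le> 2 * D" if "Good m x" for m x using that unfolding Good_def by (elim conjE)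
  have GE: "\<forall>s\<in>SS N - SS m. x s = c s" if "Good m x" for m x using that unfolding Good_def by (elim conjE)
  define Inv where "Inv = (\<lambda>n (X :: nat \<Rightarrow> nat \<times> (real^'d) \<Rightarrow> real).
     (\<forall>m\<le>n. Good m (X m)) \<and>
     (\<forall>m m'. m \<le> m' \<longrightarrow> m' \<le> n \<longrightarrow> (\<forall>s\<in>SS m. X m s \<in> {0,1} \<longrightarrow> X m' s = X m s)))"
  have inv: "n \<le> N \<Longrightarrow> \<exists>X. Inv n X" for n
  proof (induction n)
    case 0
    have "SS 0 = {}" unfolding SS_def by simp
    then have "Good 0 c" unfolding Good_def using c01 csum by auto
    then show ?case unfolding Inv_def by (intro exI[of _ "\<lambda>_. c"]) auto
  next
    case (Suc n)
    then obtain X where X: "Inv n X" by auto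
    have nN: "n \<le> N" "Suc n \<le> N" using Suc by auto
    define x where "x = X n"
    have XG: "\<forall>m\<le>n. Good m (X m)" using X unfolding Inv_def by (elim conjE)
    have XP: "\<forall>m m'. m \<le> m' \<longrightarrow> m' \<le> n \<longrightarrow> (\<forall>s\<in>SS m. X m s \<in> {0,1} \<longrightarrow> X m' s = X m s)"
      using X unfolding Inv_def by (elim conjE)
    have Gx: "Good n x" using XG unfolding x_def by simp
    note xA = GA[OF Gx] and xB = GB[OF Gx] and xC = GC[OF Gx] and xE = GE[OF Gx]
    have finS: "finite (SS (Suc n))" using finSS[OF nN(2)] .
    have SSN: "SS (Suc n) \<subseteq> SS N" using SSmono[OF nN(2)] .
    have bsum: "(\<Sum>s\<in>{s\<in>SS (Suc n). fst s = j}. f s) = (if j \<in> {1..Suc n} then (\<Sum>v\<in>V j. f (j, v)) else 0)" for j f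
      unfolding SS_def by (rule blk_sum) (use finV[OF nN(2)] in auto)
    have x01: "\<forall>s\<in>SS (Suc n). 0 \<le> x s \<and> x s \<le> 1" using xA SSN by blast
    have xint: "\<forall>j. (\<Sum>s\<in>{s\<in>SS (Suc n). fst s = j}. x s) \<in> \<int>"
    proof
      fix j
      show "(\<Sum>s\<in>{s\<in>SS (Suc n). fst s = j}. x s) \<in> \<int>"
        unfolding bsum using xB nN by auto
    qed
    obtain y where y1: "\<forall>s\<in>SS (Suc n). 0 \<le> y s \<and> y s \<le> 1"
      and y2: "\<forall>s\<in>SS (Suc n). x s \<in> {0,1} \<longrightarrow> y s = x s"
      and y3: "\<forall>j. (\<Sum>s\<in>{s\<in>SS (Suc n). fst s = j}. y s) = (\<Sum>s\<in>{s\<in>SS (Suc n). fst s = j}. x s)"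
      and y4: "(\<Sum>s\<in>SS (Suc n). y s *\<^sub>R snd s) = (\<Sum>s\<in>SS (Suc n). x s *\<^sub>R snd s)"
      and y5: "card {s\<in>SS (Suc n). y s \<notin> {0,1}} \<le> 2*D"
      using reduce[where g=snd and b=fst and D=D and S="SS (Suc n)" and x=x, OF dep finS x01 xint] by blast
    define x' where "x' = (\<lambda>s. if s \<in> SS (Suc n) then y s else x s)"
    define X' where "X' = X(Suc n := x')"
    have A': "\<forall>s\<in>SS N. 0 \<le> x' s \<and> x' s \<le> 1" using xA y1 unfolding x'_def by auto
    have B': "\<forall>j\<in>{1..N}. (\<Sum>v\<in>V j. x' (j, v)) = real k"
    proof
      fix j assume j: "j \<in> {1..N}"
      show "(\<Sum>v\<in>V j. x' (j, v)) = real k"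
      proof (cases "j \<le> Suc n")
        case True
        then have jj: "j \<in> {1..Suc n}" using j by auto
        have "(\<Sum>v\<in>V j. x' (j, v)) = (\<Sum>v\<in>V j. y (j, v))"
          using jj unfolding x'_def SS_def by (intro sum.cong) auto
        also have "\<dots> = (\<Sum>v\<in>V j. x (j, v))" using y3[rule_format, of j] jj unfolding bsum by simp
        finally show ?thesis using xB j by simp
      next
        case False
        then have "(\<Sum>v\<in>V j. x' (j, v)) = (\<Sum>v\<in>V j. x (j, v))"
          unfolding x'_def SS_def by (intro sum.cong) auto
        then show ?thesis using xB j by simp
      qed
    qed
    have C': "(\<Sum>s\<in>SS (Suc n). x' s *\<^sub>R snd s) = (\<Sum>s\<in>SS (Suc n). c s *\<^sub>R snd s)"
    proof -
      have "(\<Sum>s\<in>SS (Suc n). x' s *\<^sub>R snd s) = (\<Sum>s\<in>SS (Suc n). x s *\<^sub>R snd s)"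
        using y4 unfolding x'_def by simp
      also have "\<dots> = (\<Sum>s\<in>SS (Suc n) - SS n. x s *\<^sub>R snd s) + (\<Sum>s\<in>SS n. x s *\<^sub>R snd s)"
        using sum.subset_diff[OF SSmono[of n "Suc n"] finS] by simp
      also have "\<dots> = (\<Sum>s\<in>SS (Suc n) - SS n. c s *\<^sub>R snd s) + (\<Sum>s\<in>SS n. c s *\<^sub>R snd s)"
      proof -
        have "(\<Sum>s\<in>SS (Suc n) - SS n. x s *\<^sub>R snd s) = (\<Sum>s\<in>SS (Suc n) - SS n. c s *\<^sub>R snd s)"
          using xE SSN by (intro sum.cong) auto
        then show ?thesis using xC by simp
      qed
      also have "\<dots> = (\<Sum>s\<in>SS (Suc n). c s *\<^sub>R snd s)"
        by (rule sum.subset_diff[OF SSmono[of n "Suc n"] finS, symmetric]) simp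
      finally show ?thesis .
    qed
    have D': "card {s\<in>SS (Suc n). x' s \<notin> {0,1}} \<le> 2 * D"
    proof -
      have "{s\<in>SS (Suc n). x' s \<notin> {0,1}} = {s\<in>SS (Suc n). y s \<notin> {0,1}}" unfolding x'_def by auto
      then show ?thesis using y5 by simp
    qed
    have E': "\<forall>s\<in>SS N - SS (Suc n). x' s = c s"
      using xE SSmono[of n "Suc n"] unfolding x'_def by auto
    have Gx': "Good (Suc n) x'" unfolding Good_def using A' B' C' D' E' by blast
    have "Inv (Suc n) X'"
      unfolding Inv_def
    proof (intro conjI allI impI)
      fix m assume m: "m \<le> Suc n"
      show "Good m (X' m)"
      proof (cases "m = Suc n")
        case True
        then show ?thesis using Gx' unfolding X'_def by simp
      next
        case False
        then have "m \<le> n" "X' m = X m" using m unfolding X'_def by auto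
        then show ?thesis using XG by simp
      qed
    next
      fix m m' assume mm: "m \<le> m'" "m' \<le> Suc n"
      show "\<forall>s\<in>SS m. X' m s \<in> {0,1} \<longrightarrow> X' m' s = X' m s"
      proof (cases "m' = Suc n")
        case False
        then have "m' \<le> n" "X' m' = X m'" "X' m = X m" using mm unfolding X'_def by auto
        then show ?thesis using XP mm by simp
      next
        case True
        show ?thesis
        proof (cases "m = Suc n")
          case True
          then show ?thesis using \<open>m' = Suc n\<close> by simp
        next
          case False
          then have mn: "m \<le> n" "X' m = X m" using mm unfolding X'_def by auto
          show ?thesis
          proof (intro ballI impI)
            fix s assume s: "s \<in> SS m" "X' m s \<in> {0,1}"
            then have "X n s = X m s" using XP mn by auto
            moreover have "s \<in> SS (Suc n)" using s SSmono[of m "Suc n"] mn by auto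
            ultimately have "x' s = X m s" using y2 s mn unfolding x'_def x_def by auto
            then show "X' m' s = X' m s" using True mn unfolding X'_def by simp
          qed
        qed
      qed
    qed
    then show ?case by blast
  qed
  obtain X where X: "Inv N X" using inv by blast
  define x where "x = X N"
  have XG: "\<forall>m\<le>N. Good m (X m)" using X unfolding Inv_def by (elim conjE)
  have XP: "\<forall>m m'. m \<le> m' \<longrightarrow> m' \<le> N \<longrightarrow> (\<forall>s\<in>SS m. X m s \<in> {0,1} \<longrightarrow> X m' s = X m s)"
    using X unfolding Inv_def by (elim conjE)
  have Gx: "Good N x" using XG unfolding x_def by simp
  note xA = GA[OF Gx] and xB = GB[OF Gx]
  have bsumN: "(\<Sum>s\<in>{s\<in>SS N. fst s = j}. f s) = (if j \<in> {1..N} then (\<Sum>v\<in>V j. f (j, v)) else 0)" for j f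
    unfolding SS_def by (rule blk_sum) (use finV[of N] in auto)
  have xint: "\<forall>j. (\<Sum>s\<in>{s\<in>SS N. fst s = j}. x s) \<in> \<int>"
    using xB unfolding bsumN by auto
  have dep0: "\<exists>a. (\<exists>t\<in>T. a t \<noteq> 0) \<and> (\<Sum>t\<in>T. a t *\<^sub>R h t) = 0"
    if TT: "finite T" "card T > 0" "\<And>t. t \<in> T \<Longrightarrow> \<exists>u w. h t = (\<lambda>_. 0::real) u - (\<lambda>_. 0::real) w"
    for T and h :: "nat \<times> (real^'d) \<Rightarrow> real"
  proof -
    have h0: "h t = 0" if "t \<in> T" for t using TT(3)[OF that] by simp
    obtain t0 where t0: "t0 \<in> T" using TT(2) by (metis card.empty ex_in_conv less_irrefl)
    show ?thesis
    proof (intro exI[of _ "\<lambda>_. 1"] conjI)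
      show "\<exists>t\<in>T. (1::real) \<noteq> 0" using t0 by (intro bexI[of _ t0]) simp_all
      show "(\<Sum>t\<in>T. 1 *\<^sub>R h t) = 0" using h0 by simp
    qed
  qed
  obtain u where u1: "\<forall>s\<in>SS N. 0 \<le> u s \<and> u s \<le> 1"
      and u2: "\<forall>s\<in>SS N. x s \<in> {0,1} \<longrightarrow> u s = x s"
      and u3: "\<forall>j. (\<Sum>s\<in>{s\<in>SS N. fst s = j}. u s) = (\<Sum>s\<in>{s\<in>SS N. fst s = j}. x s)"
      and u5: "card {s\<in>SS N. u s \<notin> {0,1}} \<le> 2*0"
  proof -
    have "\<exists>u. (\<forall>s\<in>SS N. 0 \<le> u s \<and> u s \<le> 1) \<and> (\<forall>s\<in>SS N. x s \<in> {0,1} \<longrightarrow> u s = x s) \<and>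
     (\<forall>j. (\<Sum>s\<in>{s\<in>SS N. fst s = j}. u s) = (\<Sum>s\<in>{s\<in>SS N. fst s = j}. x s)) \<and>
     (\<Sum>s\<in>SS N. u s *\<^sub>R (0::real)) = (\<Sum>s\<in>SS N. x s *\<^sub>R 0) \<and> card {s\<in>SS N. u s \<notin> {0,1}} \<le> 2*0"
      by (rule reduce[where g="\<lambda>_. 0::real" and b=fst and D=0 and S="SS N" and x=x, OF dep0 finSS[OF order_refl] xA xint])
    then show ?thesis using that by (elim exE conjE) blast
  qed
  have uint: "\<forall>s\<in>SS N. u s \<in> {0,1}"
  proof -
    have "{s\<in>SS N. u s \<notin> {0,1}} = {}" using u5 finSS[OF order_refl] by simp
    then show ?thesis by blast
  qed
  define U where "U = (\<lambda>i. {v\<in>V i. u (i, v) = 1})"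
  have Ucard: "U i \<subseteq> V i \<and> card (U i) = k" if i: "i \<in> {1..N}" for i
  proof
    show "U i \<subseteq> V i" unfolding U_def by auto
    have "real (card (U i)) = (\<Sum>v\<in>U i. 1)" by simp
    also have "\<dots> = (\<Sum>v\<in>V i. if u (i, v) = 1 then 1 else 0)"
      unfolding U_def by (rule sum.inter_filter[OF assms(4)[OF i]])
    also have "\<dots> = (\<Sum>v\<in>V i. u (i, v))"
    proof (intro sum.cong refl)
      fix v assume "v \<in> V i"
      then have "(i, v) \<in> SS N" using i SS_def by auto
      then have "u (i, v) \<in> {0,1}" using uint by blast
      then show "(if u (i, v) = 1 then 1 else 0) = u (i, v)" by auto
    qed
    also have "\<dots> = real k"
      using u3[rule_format, of i] xB i unfolding bsumN by simp
    finally show "card (U i) = k" by simp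
  qed
  have persist: "\<forall>s\<in>SS n. X n s \<in> {0,1} \<longrightarrow> u s = X n s" if n: "n \<le> N" for n
  proof (intro ballI impI)
    fix s assume s: "s \<in> SS n" "X n s \<in> {0,1}"
    have "X N s = X n s" using XP n s by blast
    moreover have "s \<in> SS N" using s SSmono[OF n] by auto
    ultimately show "u s = X n s" using u2 s unfolding x_def by auto
  qed
  have bound: "nrm (\<Sum>i \<in> {1..n}. (\<Sum>v \<in> U i. v) - (real k / real (card (V i))) *\<^sub>R (\<Sum>v \<in> V i. v)) \<le> 2 * real CARD('d)"
    if n: "n \<in> {1..N}" for n
  proof -
    have nN: "n \<le> N" using n by auto
    have Gn: "Good n (X n)" using XG nN by simp
    note XnA = GA[OF Gn] and XnC = GC[OF Gn] and XnD = GD[OF Gn]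
    define F where "F = {s\<in>SS n. X n s \<notin> {0,1}}"
    have SSnN: "SS n \<subseteq> SS N" using SSmono[OF nN] .
    have inner: "(\<Sum>v \<in> U i. v) - (real k / real (card (V i))) *\<^sub>R (\<Sum>v \<in> V i. v) = (\<Sum>v\<in>V i. (u (i, v) - c (i, v)) *\<^sub>R v)"
      if i: "i \<in> {1..n}" for i
    proof -
      have iN: "i \<in> {1..N}" using i nN by auto
      have "(\<Sum>v \<in> U i. v) = (\<Sum>v\<in>V i. if u (i, v) = 1 then v else 0)"
        unfolding U_def using assms(4)[OF iN] by (simp add: sum.inter_filter)
      also have "\<dots> = (\<Sum>v\<in>V i. u (i, v) *\<^sub>R v)"
      proof (intro sum.cong refl)
        fix v assume "v \<in> V i"
        then have "(i, v) \<in> SS N" using iN SS_def by auto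
        then have "u (i, v) \<in> {0,1}" using uint by blast
        then show "(if u (i, v) = 1 then v else 0) = u (i, v) *\<^sub>R v" by auto
      qed
      finally have 1: "(\<Sum>v \<in> U i. v) = (\<Sum>v\<in>V i. u (i, v) *\<^sub>R v)" .
      have 2: "(real k / real (card (V i))) *\<^sub>R (\<Sum>v \<in> V i. v) = (\<Sum>v\<in>V i. c (i, v) *\<^sub>R v)"
        unfolding c_def by (simp add: scaleR_sum_right)
      show ?thesis unfolding 1 2 by (simp add: sum_subtractf scaleR_diff_left)
    qed
    have "(\<Sum>i \<in> {1..n}. (\<Sum>v \<in> U i. v) - (real k / real (card (V i))) *\<^sub>R (\<Sum>v \<in> V i. v))
        = (\<Sum>i \<in> {1..n}. \<Sum>v\<in>V i. (u (i, v) - c (i, v)) *\<^sub>R v)"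
      using inner by (rule sum.cong[OF refl])
    also have "\<dots> = (\<Sum>s\<in>SS n. (u s - c s) *\<^sub>R snd s)"
      unfolding SS_def using sigma_sum[of "{1..n}" V "\<lambda>s. (u s - c s) *\<^sub>R snd s"] finV[OF nN] by simp
    also have "\<dots> = (\<Sum>s\<in>SS n. u s *\<^sub>R snd s) - (\<Sum>s\<in>SS n. c s *\<^sub>R snd s)"
      by (simp add: scaleR_diff_left sum_subtractf)
    also have "\<dots> = (\<Sum>s\<in>SS n. (u s - X n s) *\<^sub>R snd s)"
      unfolding XnC[symmetric] by (simp add: scaleR_diff_left sum_subtractf)
    also have "\<dots> = (\<Sum>s\<in>F. (u s - X n s) *\<^sub>R snd s)"
      using persist[OF nN] finSS[OF nN] unfolding F_def by (intro sum.mono_neutral_right) auto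
    finally have eq: "(\<Sum>i \<in> {1..n}. (\<Sum>v \<in> U i. v) - (real k / real (card (V i))) *\<^sub>R (\<Sum>v \<in> V i. v))
        = (\<Sum>s\<in>F. (u s - X n s) *\<^sub>R snd s)" .
    have "nrm (\<Sum>s\<in>F. (u s - X n s) *\<^sub>R snd s) \<le> (\<Sum>s\<in>F. nrm ((u s - X n s) *\<^sub>R snd s))"
      by (rule nrm_sum[OF nrm])
    also have "\<dots> \<le> (\<Sum>s\<in>F. 1)"
    proof (intro sum_mono)
      fix s assume sF: "s \<in> F"
      then have sN: "s \<in> SS N" using F_def SSnN by auto
      have "\<bar>u s - X n s\<bar> \<le> 1" using u1 XnA sN by fastforce
      moreover have "nrm (snd s) \<le> 1" using sN assms(5) unfolding SS_def by fastforce
      moreover have "0 \<le> nrm (snd s)" using nrm unfolding is_norm_def by blast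
      ultimately have "\<bar>u s - X n s\<bar> * nrm (snd s) \<le> 1 * 1"
        by (intro mult_mono) auto
      then show "nrm ((u s - X n s) *\<^sub>R snd s) \<le> 1" using nrm_scale[OF nrm] by simp
    qed
    also have "\<dots> = real (card F)" by simp
    also have "\<dots> \<le> 2 * real CARD('d)" using XnD unfolding F_def D_def by simp
    finally show ?thesis unfolding eq .
  qed
  show ?thesis
  proof (intro exI[of _ U] conjI)
    show "\<forall>i\<in>{1..N}. U i \<subseteq> V i \<and> card (U i) = k" using Ucard by blast
    have ne: "{1..N} \<noteq> {}" using assms(2) by simp
    show "(MAX n \<in> {1..N}. nrm (\<Sum>i \<in> {1..n}.
               (\<Sum>v \<in> U i. v) - (real k / real (card (V i))) *\<^sub>R (\<Sum>v \<in> V i. v)))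
             \<le> 2 * real CARD('d)"
      using bound ne by (subst Max_le_iff) auto
  qed
qed

end
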